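(* Let $\gamma$ be a Jordan curve in $\mathbb{R}^2$ and let $x\in\gamma$. Suppose there exists an open disk $D$ of radius $1$ with $x\in\partial D$ such that (1) there exists $\varepsilon>0$ with $B(x,\varepsilon)\cap\operatorname{Int}\gamma\subset D$, and (2) for every $\eta>0$ we have $\gamma\cap B(x,\eta)\cap D\neq\emptyset$. Then $\gamma$ does not have bounded convex curvature.
   Context: For a Jordan curve $\gamma$, $\operatorname{Int}\gamma$ denotes the bounded component of $\mathbb{R}^2\setminus\gamma$. $B(x,\varepsilon)$ is the open disk of center $x$ and radius $\varepsilon$. A Jordan curve $\gamma$ has bounded convex curvature if for every point $x\in\gamma$ there exist an open disk $U_x$ of radius $1$ and $\varepsilon_x>0$ such that $x\in\partial U_x$ and $B(x,\varepsilon_x)\cap U_x\subset\operatorname{Int}\gamma$. *)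

theory Defs
  imports "HOL-Analysis.Analysis"
begin

text \<open>The plane is modelled as the complex numbers (as in the library's Jordan curve theorem).
A Jordan curve is the image of a simple closed path.\<close>

definition jordan_curve :: "complex set \<Rightarrow> bool" where
  "jordan_curve \<gamma> \<longleftrightarrow>
     (\<exists>g. simple_path g \<and> pathfinish g = pathstart g \<and> \<gamma> = path_image g)"

definition Int_curve :: "complex set \<Rightarrow> complex set" where
  "Int_curve \<gamma> = inside \<gamma>"

definition bounded_convex_curvature :: "complex set \<Rightarrow> bool" where
  "bounded_convex_curvature \<gamma> \<longleftrightarrow>
     (\<forall>x\<in>\<gamma>. \<exists>c \<epsilon>. \<epsilon> > 0 \<and> x \<in> frontier (ball c 1) \<and>
        ball x \<epsilon> \<inter> ball c 1 \<subseteq> Int_curve \<gamma>)"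

end

theory Submission
  imports Defs
begin

lemma geom_aux:
  fixes a b :: "'a::real_inner"
  assumes "norm a = 1" "norm b = 1" "0 < t" "t < 1" "a \<noteq> b"
  shows "norm (t *\<^sub>R (a - b) - a) < 1 \<and> norm (t *\<^sub>R (a - b) - b) \<ge> 1"
proof -
  have na: "a \<bullet> a = 1" using assms(1) by (simp add: dot_square_norm)
  have nb: "b \<bullet> b = 1" using assms(2) by (simp add: dot_square_norm)
  have w: "(a - b) \<bullet> (a - b) > 0" using assms(5) by simp
  have ww: "(a - b) \<bullet> (a - b) = 2 - 2 * (a \<bullet> b)"
    using na nb by (simp add: inner_diff inner_commute)
  have e1: "norm (t *\<^sub>R (a - b) - a) ^ 2 = 1 - t * (1 - t) * ((a - b) \<bullet> (a - b))"
    unfolding power2_norm_eq_inner using na nb ww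
    by (simp add: inner_diff inner_commute algebra_simps power2_eq_square)
  have e2: "norm (t *\<^sub>R (a - b) - b) ^ 2 = 1 + t * (1 + t) * ((a - b) \<bullet> (a - b))"
    unfolding power2_norm_eq_inner using na nb ww
    by (simp add: inner_diff inner_commute algebra_simps power2_eq_square)
  have p1: "t * (1 - t) * ((a - b) \<bullet> (a - b)) > 0" using assms w by simp
  have p2: "t * (1 + t) * ((a - b) \<bullet> (a - b)) \<ge> 0" using assms w by simp
  have "norm (t *\<^sub>R (a - b) - a) ^ 2 < 1 ^ 2" using e1 p1 by simp
  hence "norm (t *\<^sub>R (a - b) - a) < 1" by (rule power2_less_imp_less) simp
  moreover have "1 ^ 2 \<le> norm (t *\<^sub>R (a - b) - b) ^ 2" using e2 p2 by simp
  hence "1 \<le> norm (t *\<^sub>R (a - b) - b)" by (rule power2_le_imp_le) simp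
  ultimately show ?thesis by simp
qed

lemma same_center:
  fixes x c c' :: complex
  assumes "dist c x = 1" "dist c' x = 1" "r > 0"
    and sub: "ball x r \<inter> ball c' 1 \<subseteq> ball c 1"
  shows "c = c'"
proof (rule ccontr)
  assume ne: "c \<noteq> c'"
  define a where "a = c' - x"
  define b where "b = c - x"
  have na: "norm a = 1" using assms(2) by (simp add: a_def dist_norm)
  have nb: "norm b = 1" using assms(1) by (simp add: b_def dist_norm)
  have ab: "a \<noteq> b" using ne by (auto simp: a_def b_def)
  have pw: "norm (a - b) > 0" using ab by simp
  define t where "t = min (1/2) (r / (2 * norm (a - b)))"
  have t0: "t > 0" using assms(3) pw by (simp add: t_def)
  have t1: "t < 1" by (simp add: t_def)
  have tr: "t * norm (a - b) < r"
  proof -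
    have "t * norm (a - b) \<le> (r / (2 * norm (a - b))) * norm (a - b)"
      using pw by (intro mult_right_mono) (auto simp: t_def)
    also have "\<dots> = r / 2" using pw by simp
    finally show ?thesis using assms(3) by simp
  qed
  define z where "z = x + t *\<^sub>R (a - b)"
  from geom_aux[OF na nb t0 t1 ab] have g:
    "norm (t *\<^sub>R (a - b) - a) < 1" "norm (t *\<^sub>R (a - b) - b) \<ge> 1" by auto
  have zx: "z \<in> ball x r" using tr t0 by (simp add: z_def dist_norm)
  have "z - c' = t *\<^sub>R (a - b) - a" by (simp add: z_def a_def)
  hence zc': "z \<in> ball c' 1" using g(1) by (metis dist_commute dist_norm mem_ball)
  have "z - c = t *\<^sub>R (a - b) - b" by (simp add: z_def b_def)
  hence zc: "z \<notin> ball c 1" using g(2) by (metis dist_commute dist_norm mem_ball not_less)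
  show False using sub zx zc zc' by blast
qed

theorem lemma1:
  fixes \<gamma> :: "complex set" and x c :: complex
  assumes "jordan_curve \<gamma>"
    and "x \<in> \<gamma>"
    and "x \<in> frontier (ball c 1)"
    and "\<exists>\<epsilon>>0. ball x \<epsilon> \<inter> Int_curve \<gamma> \<subseteq> ball c 1"
    and "\<forall>\<eta>>0. \<gamma> \<inter> ball x \<eta> \<inter> ball c 1 \<noteq> {}"
  shows "\<not> bounded_convex_curvature \<gamma>"
proof
  assume "bounded_convex_curvature \<gamma>"
  then obtain c' e where e: "e > 0" "x \<in> frontier (ball c' 1)"
      "ball x e \<inter> ball c' 1 \<subseteq> Int_curve \<gamma>"
    using assms(2) unfolding bounded_convex_curvature_def by blast
  obtain d where d: "d > 0" "ball x d \<inter> Int_curve \<gamma> \<subseteq> ball c 1" using assms(4) by blast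
  define r where "r = min d e"
  have r0: "r > 0" using d e by (simp add: r_def)
  have "ball x r \<inter> ball c' 1 \<subseteq> ball c 1"
    using e(3) d(2) unfolding r_def by fastforce
  moreover have "dist c x = 1" using assms(3) by (simp add: frontier_ball)
  moreover have "dist c' x = 1" using e(2) by (simp add: frontier_ball)
  ultimately have cc: "c = c'" using same_center r0 by blast
  obtain y where y: "y \<in> \<gamma>" "y \<in> ball x e" "y \<in> ball c 1" using assms(5) e(1) by blast
  have "y \<in> inside \<gamma>" using e(3) y cc by (auto simp: Int_curve_def)
  thus False using y(1) inside_no_overlap by blast
qed

end
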